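(* Let $k,m,t$ be positive integers with $m+t\le k$ and let $q$ be a prime power. Let $B$ be the bipartite graph whose left (user) vertex set is the set $\mathbb{V}$ of all $t$-dimensional subspaces of $\mathbb{F}_q^k$, whose right (subfile) vertex set is the set $\mathbb{X}$ of all $(m+t)$-dimensional subspaces of $\mathbb{F}_q^k$, and in which $V\in\mathbb{V}$ is adjacent to $X\in\mathbb{X}$ if and only if $V\subseteq X$. Then $B$ is a $(K,F,D)$ bipartite caching graph (for some $D$) with $K=\binom{k}{t}_q$ and $F=\binom{k}{m+t}_q$, and $B$ admits an induced matching cover consisting of $S=\binom{k}{m}_q$ induced matchings each having $g=\binom{k-m}{t}_q$ edges. Consequently (for a library of $N\ge K$ files) it defines a coded caching scheme with $K=\binom{k}{t}_q$ users, subpacketization $F=\binom{k}{m+t}_q$, cache fraction $$\frac{M}{N}=1-\frac{\binom{k-t}{m}_q}{\binom{k}{m+t}_q},$$ rate $R=\binom{k}{m}_q\big/\binom{k}{m+t}_q$, and global caching gain $\gamma=\binom{k-m}{t}_q$.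
   Context: For a prime power $q$ and integers $0\le b\le a$, the Gaussian binomial coefficient is $\binom{a}{b}_q=\frac{(q^a-1)(q^{a-1}-1)\cdots(q^{a-b+1}-1)}{(q^b-1)\cdots(q-1)}$ (with $\binom{a}{0}_q=1$); it equals the number of $b$-dimensional subspaces of an $a$-dimensional vector space over $\mathbb{F}_q$. Coded caching setup: a server holds $N$ files $W_1,\dots,W_N$ and is connected by an error-free broadcast link to $K$ users, each having a cache able to store $M$ files; it is assumed throughout that $N\ge K$. Each file is split into $F$ equal-size subfiles $W_{i,f}$, $f\in\mathcal{F}$, $|\mathcal{F}|=F$ ($F$ is the subpacketization). Caching is done before demands are known and is symmetric: for every user $k$ and index $f$, user $k$ caches either $W_{i,f}$ for all $i\in[N]$ or for no $i$. In the delivery phase every user demands one file and the server broadcasts transmissions, each of the size of one subfile, so that every user can recover its demanded file from its cache and the transmissions, for every demand vector. The rate is $R=(\text{number of transmissions})/F$ and the global caching gain is $\gamma=K(1-M/N)/R$. A $(K,F,D)$ bipartite caching graph is a bipartite graph with $K$ left (user) vertices and $F$ right (subfile) vertices in which every left vertex has degree $D$; it defines the symmetric caching scheme in which user $k$ does not cache the subfiles with index $f$ exactly when $\{k,f\}$ is an edge (so $M/N=1-D/F$). An induced matching of a bipartite graph $B$ is a set $\mathcal{C}\subseteq E(B)$ such that for any two distinct edges $\{k_1,f_1\},\{k_2,f_2\}\in\mathcal{C}$ we have $k_1\ne k_2$, $f_1\ne f_2$ and $\{k_1,f_2\},\{k_2,f_1\}\notin E(B)$. An induced matching cover of $B$ is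 a set of induced matchings that partitions $E(B)$. (Each induced matching $\{\{k_i,f_i\}\}_{i}$ yields the transmission $\sum_i W_{d_{k_i},f_i}$, where $W_{d_k}$ is the file demanded by user $k$.) *)

theory Defs
  imports "HOL-Analysis.Analysis"
begin

text \<open>Gaussian binomial coefficient [a choose b]_q, given by the product formula
  (the quotient is exact for 0 <= b <= a and q >= 2).\<close>
definition gauss_binom :: "nat \<Rightarrow> nat \<Rightarrow> nat \<Rightarrow> nat" where
  "gauss_binom q a b =
     (\<Prod>i<b. q ^ (a - i) - 1) div (\<Prod>i<b. q ^ (i + 1) - 1)"

definition caching_graph ::
  "nat \<Rightarrow> nat \<Rightarrow> nat \<Rightarrow> 'u set \<Rightarrow> 'f set \<Rightarrow> ('u \<times> 'f) set \<Rightarrow> bool" where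
  "caching_graph K F D L R E \<longleftrightarrow>
     finite L \<and> finite R \<and> card L = K \<and> card R = F \<and> E \<subseteq> L \<times> R \<and>
     (\<forall>k\<in>L. card {f. (k, f) \<in> E} = D)"

definition induced_matching :: "('u \<times> 'f) set \<Rightarrow> ('u \<times> 'f) set \<Rightarrow> bool" where
  "induced_matching E C \<longleftrightarrow> C \<subseteq> E \<and>
     (\<forall>k1 f1 k2 f2. (k1, f1) \<in> C \<longrightarrow> (k2, f2) \<in> C \<longrightarrow> (k1, f1) \<noteq> (k2, f2) \<longrightarrow>
        k1 \<noteq> k2 \<and> f1 \<noteq> f2 \<and> (k1, f2) \<notin> E \<and> (k2, f1) \<notin> E)"

definition induced_matching_cover :: "('u \<times> 'f) set \<Rightarrow> ('u \<times> 'f) set set \<Rightarrow> bool" where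
  "induced_matching_cover E Cs \<longleftrightarrow>
     (\<forall>C\<in>Cs. induced_matching E C \<and> C \<noteq> {}) \<and> \<Union>Cs = E \<and>
     (\<forall>C1\<in>Cs. \<forall>C2\<in>Cs. C1 \<noteq> C2 \<longrightarrow> C1 \<inter> C2 = {})"

text \<open>Parameters of the coded caching scheme defined by a (K,F,D) caching graph with
  an induced matching cover of S matchings: M/N = 1 - D/F, R = S/F,
  gamma = K (1 - M/N) / R.\<close>
definition cache_fraction :: "nat \<Rightarrow> nat \<Rightarrow> real" where
  "cache_fraction F D = 1 - real D / real F"

definition scheme_rate :: "nat \<Rightarrow> nat \<Rightarrow> real" where
  "scheme_rate F S = real S / real F"

definition caching_gain :: "nat \<Rightarrow> nat \<Rightarrow> nat \<Rightarrow> nat \<Rightarrow> real" where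
  "caching_gain K F D S = real K * (1 - cache_fraction F D) / scheme_rate F S"

end

theory Submission
  imports Defs
begin


lemma hall_aux:
  assumes "card A = n" "finite A" "\<forall>a\<in>A. finite (N a)"
    "\<forall>S\<subseteq>A. card S \<le> card (\<Union>(N ` S))"
  shows "\<exists>f. inj_on f A \<and> (\<forall>a\<in>A. f a \<in> N a)"
  using assms
proof (induction n arbitrary: A N rule: less_induct)
  case (less n A N)
  show ?case
  proof (cases "A = {}")
    case True then show ?thesis by auto
  next
    case False
    show ?thesis
    proof (cases "\<exists>S. S \<noteq> {} \<and> S \<subset> A \<and> card (\<Union>(N ` S)) = card S")
      case True
      then obtain S where S: "S \<noteq> {}" "S \<subset> A" "card (\<Union>(N ` S)) = card S" by blast
      have fS: "finite S" using S less.prems(2) finite_subset by blast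
      have cS: "card S < n" using S less.prems(1,2) psubset_card_mono by blast
      have h1: "\<forall>a\<in>S. finite (N a)" using less.prems(3) S by auto
      have h2: "\<forall>T\<subseteq>S. card T \<le> card (\<Union>(N ` T))" using less.prems(4) S by auto
      obtain f1 where f1: "inj_on f1 S" "\<forall>a\<in>S. f1 a \<in> N a"
        using less.IH[OF cS refl fS h1 h2] by auto
      define N' where "N' = (\<lambda>a. N a - \<Union>(N ` S))"
      have fAS: "finite (A - S)" using less.prems(2) by auto
      have cAS: "card (A - S) < n"
      proof -
        have "card (A - S) = card A - card S" using S fS by (meson card_Diff_subset psubset_imp_subset)
        moreover have "card S > 0" using S fS by auto
        moreover have "card S \<le> card A" using S less.prems(2) by (meson card_mono psubset_imp_subset)
        ultimately show ?thesis using less.prems(1) by linarith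
      qed
      have hallAS: "\<forall>T\<subseteq>A - S. card T \<le> card (\<Union>(N' ` T))"
      proof (intro allI impI)
        fix T assume T: "T \<subseteq> A - S"
        have fT: "finite T" using T fAS finite_subset by blast
        have fin: "finite (\<Union>(N ` (T \<union> S)))"
          using less.prems(3) T S fT fS by auto
        have "T \<union> S \<subseteq> A" using T S by auto
        then have "card (T \<union> S) \<le> card (\<Union>(N ` (T \<union> S)))"
          using less.prems(4) by blast
        moreover have "card (T \<union> S) = card T + card S"
          using T fT fS by (subst card_Un_disjoint) auto
        moreover have eq: "\<Union>(N ` (T \<union> S)) = \<Union>(N' ` T) \<union> \<Union>(N ` S)"
          unfolding N'_def by auto
        moreover have "card (\<Union>(N ` (T \<union> S))) \<le> card (\<Union>(N' ` T)) + card (\<Union>(N ` S))"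
          unfolding eq by (rule card_Un_le)
        ultimately show "card T \<le> card (\<Union>(N' ` T))" using S(3) by linarith
      qed
      have h3: "\<forall>a\<in>A - S. finite (N' a)" using less.prems(3) unfolding N'_def by auto
      obtain f2 where f2: "inj_on f2 (A - S)" "\<forall>a\<in>A - S. f2 a \<in> N' a"
        using less.IH[OF cAS refl fAS h3 hallAS] by blast
      define f where "f = (\<lambda>a. if a \<in> S then f1 a else f2 a)"
      have "inj_on f A"
        unfolding inj_on_def f_def
      proof (intro ballI impI)
        fix x y assume xy: "x \<in> A" "y \<in> A"
          "(if x \<in> S then f1 x else f2 x) = (if y \<in> S then f1 y else f2 y)"
        show "x = y"
        proof (cases "x \<in> S"; cases "y \<in> S")
          assume "x \<in> S" "y \<in> S" then show ?thesis using xy f1 by (auto simp: inj_on_def)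
        next
          assume "x \<notin> S" "y \<notin> S" then show ?thesis using xy f2 by (auto simp: inj_on_def)
        next
          assume a: "x \<in> S" "y \<notin> S"
          then have "f1 x \<in> \<Union>(N ` S)" using f1 by auto
          moreover have "f2 y \<notin> \<Union>(N ` S)" using f2 a xy unfolding N'_def by blast
          ultimately show ?thesis using xy a by auto
        next
          assume a: "x \<notin> S" "y \<in> S"
          then have "f1 y \<in> \<Union>(N ` S)" using f1 by auto
          moreover have "f2 x \<notin> \<Union>(N ` S)" using f2 a xy unfolding N'_def by blast
          ultimately show ?thesis using xy a by auto
        qed
      qed
      moreover have "\<forall>a\<in>A. f a \<in> N a" using f1 f2 unfolding f_def N'_def by auto
      ultimately show ?thesis by blast
    next
      case False2: False
      obtain a where a: "a \<in> A" using False by blast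
      have "card {a} \<le> card (\<Union>(N ` {a}))" using less.prems(4) a by blast
      then have "N a \<noteq> {}" by auto
      then obtain b where b: "b \<in> N a" by blast
      define N' where "N' = (\<lambda>x. N x - {b})"
      have fA': "finite (A - {a})" using less.prems(2) by auto
      have cA': "card (A - {a}) < n" using less.prems(1,2) a
        by (metis card_Diff1_less)
      have hall': "\<forall>T\<subseteq>A - {a}. card T \<le> card (\<Union>(N' ` T))"
      proof (intro allI impI)
        fix T assume T: "T \<subseteq> A - {a}"
        show "card T \<le> card (\<Union>(N' ` T))"
        proof (cases "T = {}")
          case True then show ?thesis by simp
        next
          case False
          have fT: "finite T" using T fA' finite_subset by blast
          have "T \<subset> A" using T a by auto
          then have "card (\<Union>(N ` T)) \<noteq> card T" using False2 False by blast
          moreover have "card T \<le> card (\<Union>(N ` T))" using less.prems(4) T by auto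
          moreover have "\<Union>(N' ` T) = \<Union>(N ` T) - {b}" unfolding N'_def by auto
          moreover have "finite (\<Union>(N ` T))" using fT less.prems(3) T by auto
          ultimately show ?thesis
            using card_Diff_singleton_if[of "\<Union>(N ` T)" b] by (simp split: if_splits)
        qed
      qed
      have h3: "\<forall>x\<in>A - {a}. finite (N' x)" using less.prems(3) unfolding N'_def by auto
      obtain f' where f': "inj_on f' (A - {a})" "\<forall>x\<in>A - {a}. f' x \<in> N' x"
        using less.IH[OF cA' refl fA' h3 hall'] by blast
      define f where "f = f'(a := b)"
      have "inj_on f A" unfolding f_def using f' a unfolding N'_def inj_on_def
        by (metis Diff_iff fun_upd_apply singletonD singletonI)
      moreover have "\<forall>x\<in>A. f x \<in> N x" using f' b unfolding f_def N'_def by auto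
      ultimately show ?thesis by blast
    qed
  qed
qed

lemma hall:
  assumes "finite A" "\<forall>a\<in>A. finite (N a)"
    "\<forall>S\<subseteq>A. card S \<le> card (\<Union>(N ` S))"
  shows "\<exists>f. inj_on f A \<and> (\<forall>a\<in>A. f a \<in> N a)"
  using hall_aux[OF refl assms] .

lemma regular_count:
  assumes fA: "finite A" and fB: "finite B" and NB: "\<forall>a\<in>A. N a \<subseteq> B"
    and dA: "\<forall>a\<in>A. card (N a) = c" and dB: "\<forall>b\<in>B. card {a\<in>A. b \<in> N a} = c"
    and S: "S \<subseteq> A"
  shows "c * card S \<le> c * card (\<Union>(N ` S))"
proof -
  have fS: "finite S" using S fA finite_subset by blast
  have fN: "\<forall>a\<in>A. finite (N a)" using NB fB finite_subset by blast
  have NS: "\<Union>(N ` S) \<subseteq> B" using NB S by auto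
  have fNS: "finite (\<Union>(N ` S))" using NS fB finite_subset by blast
  have "(\<Sum>a\<in>S. card (N a)) = (\<Sum>a\<in>S. c)" using dA S by (intro sum.cong) auto
  then have "c * card S = (\<Sum>a\<in>S. card (N a))" by simp
  also have "\<dots> = card (Sigma S N)" using fS fN S by (intro card_SigmaI[symmetric]) auto
  also have "\<dots> \<le> card ((\<lambda>(b, a). (a, b)) ` Sigma (\<Union>(N ` S)) (\<lambda>b. {a\<in>A. b \<in> N a}))"
  proof (rule card_mono)
    show "finite ((\<lambda>(b, a). (a, b)) ` Sigma (\<Union>(N ` S)) (\<lambda>b. {a\<in>A. b \<in> N a}))"
      using fNS fA by auto
    show "Sigma S N \<subseteq> (\<lambda>(b, a). (a, b)) ` Sigma (\<Union>(N ` S)) (\<lambda>b. {a\<in>A. b \<in> N a})"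
      using S by (auto simp: image_iff)
  qed
  also have "\<dots> = card (Sigma (\<Union>(N ` S)) (\<lambda>b. {a\<in>A. b \<in> N a}))"
    by (rule card_image) (auto simp: inj_on_def)
  also have "\<dots> = (\<Sum>b\<in>\<Union>(N ` S). card {a\<in>A. b \<in> N a})"
    using fNS fA by (intro card_SigmaI) auto
  also have "\<dots> = c * card (\<Union>(N ` S))" using dB NS by (simp add: subset_iff)
  finally show ?thesis .
qed

lemma regular_card_eq:
  assumes fA: "finite A" and fB: "finite B" and NB: "\<forall>a\<in>A. N a \<subseteq> B"
    and dA: "\<forall>a\<in>A. card (N a) = c" and dB: "\<forall>b\<in>B. card {a\<in>A. b \<in> N a} = c"
    and c: "c > 0"
  shows "card A = card B"
proof -
  have fN: "\<forall>a\<in>A. finite (N a)" using NB fB finite_subset by blast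
  have "c * card A = (\<Sum>a\<in>A. card (N a))" using dA by simp
  also have "\<dots> = card (Sigma A N)" using fA fN by (intro card_SigmaI[symmetric]) auto
  also have "Sigma A N = (\<lambda>(b, a). (a, b)) ` Sigma B (\<lambda>b. {a\<in>A. b \<in> N a})"
    using NB[unfolded subset_iff] by (auto simp: image_iff)
  also have "card \<dots> = card (Sigma B (\<lambda>b. {a\<in>A. b \<in> N a}))"
    by (rule card_image) (auto simp: inj_on_def)
  also have "\<dots> = (\<Sum>b\<in>B. card {a\<in>A. b \<in> N a})"
    using fB fA by (intro card_SigmaI) auto
  also have "\<dots> = c * card B" using dB by simp
  finally show ?thesis using c by simp
qed



lemma card_subspace:
  fixes S :: "('a::{field,finite} ^ 'n) set"
  assumes "vec.subspace S"
  shows "card S = CARD('a) ^ vec.dim S"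
proof -
  obtain B where B: "B \<subseteq> S" "vec.independent B" "S \<subseteq> vec.span B" "card B = vec.dim S"
    using vec.basis_exists by blast
  have fB: "finite B" by simp
  have spanB: "vec.span B = S" using B assms vec.span_subspace by blast
  define g where "g = (\<lambda>u. \<Sum>v\<in>B. u v *s v)"
  have img: "g ` (B \<rightarrow>\<^sub>E UNIV) = S"
  proof
    show "g ` (B \<rightarrow>\<^sub>E UNIV) \<subseteq> S"
      using spanB vec.span_finite[OF fB] unfolding g_def by auto
    show "S \<subseteq> g ` (B \<rightarrow>\<^sub>E UNIV)"
    proof
      fix x assume "x \<in> S"
      then obtain u where u: "x = (\<Sum>v\<in>B. u v *s v)"
        using spanB vec.span_finite[OF fB] by auto
      have "restrict u B \<in> B \<rightarrow>\<^sub>E UNIV" by auto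
      moreover have "g (restrict u B) = x" unfolding g_def u by (auto intro: sum.cong)
      ultimately show "x \<in> g ` (B \<rightarrow>\<^sub>E UNIV)" by blast
    qed
  qed
  have inj: "inj_on g (B \<rightarrow>\<^sub>E UNIV)"
  proof (rule inj_onI)
    fix u1 u2 assume u: "u1 \<in> B \<rightarrow>\<^sub>E UNIV" "u2 \<in> B \<rightarrow>\<^sub>E UNIV" "g u1 = g u2"
    have "(\<Sum>v\<in>B. (u1 v - u2 v) *s v) = g u1 - g u2"
      unfolding g_def by (simp add: vector_sub_rdistrib sum_subtractf)
    then have z: "(\<Sum>v\<in>B. (u1 v - u2 v) *s v) = 0" using u by simp
    have all: "\<forall>w. (\<Sum>v\<in>B. w v *s v) = 0 \<longrightarrow> (\<forall>v\<in>B. w v = 0)"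
      using B(2) vec.dependent_finite[OF fB] by auto
    have "\<forall>v\<in>B. u1 v - u2 v = 0"
      using all[rule_format, OF z] by blast
    then show "u1 = u2" using u by (intro PiE_ext) auto
  qed
  have "card S = card (B \<rightarrow>\<^sub>E (UNIV::'a set))" using card_image[OF inj] img by simp
  also have "\<dots> = CARD('a) ^ card B" by (simp add: card_PiE)
  finally show ?thesis using B by simp
qed

definition ext :: "('a::{field,finite} ^ 'n) set \<Rightarrow> ('a ^ 'n) set \<Rightarrow> nat \<Rightarrow> ('a ^ 'n) list set" where
  "ext Y A r = {ws. length ws = r \<and> set ws \<subseteq> A \<and> vec.dim (Y \<union> set ws) = vec.dim Y + r}"

lemma finite_ext:
  fixes Y A :: "('a::{field,finite} ^ 'n) set"
  shows "finite (ext Y A r)"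
proof -
  have fU: "finite (UNIV :: ('a ^ 'n) set)" by simp
  have "ext Y A r \<subseteq> {xs. set xs \<subseteq> UNIV \<and> length xs = r}" unfolding ext_def by auto
  then show ?thesis using finite_lists_length_eq[OF fU, of r] finite_subset by auto
qed

lemma dim_le_list:
  fixes Y :: "('a::{field,finite} ^ 'n) set"
  shows "vec.dim (Y \<union> set ws) \<le> vec.dim Y + length ws"
proof (induction ws)
  case Nil then show ?case by simp
next
  case (Cons w ws)
  have "Y \<union> set (w # ws) = insert w (Y \<union> set ws)" by auto
  then have "vec.dim (Y \<union> set (w # ws)) \<le> vec.dim (Y \<union> set ws) + 1"
    by (simp add: vec.dim_insert)
  then show ?case using Cons by simp
qed

lemma dim_un_int:
  fixes Y Z :: "('a::{field,finite} ^ 'n) set"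
  assumes "vec.subspace Y" "vec.subspace Z"
  shows "vec.dim (Y \<union> Z) + vec.dim (Y \<inter> Z) = vec.dim Y + vec.dim Z"
proof -
  have sY: "vec.span Y = Y" and sZ: "vec.span Z = Z" using assms vec.span_eq_iff by auto
  have "vec.span (Y \<union> Z) = {x + y |x y. x \<in> Y \<and> y \<in> Z}"
    using vec.span_Un[of Y Z] unfolding sY sZ .
  then have "vec.dim (Y \<union> Z) = vec.dim {x + y |x y. x \<in> Y \<and> y \<in> Z}"
    by (metis vec.dim_span)
  then show ?thesis using vec.dim_sums_Int[OF assms] by simp
qed

lemma span_absorb:
  fixes Y V W :: "('a::{field,finite} ^ 'n) set"
  assumes "V \<subseteq> Y"
  shows "vec.span (Y \<union> vec.span (V \<union> W)) = vec.span (Y \<union> W)"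
proof -
  have "Y \<union> vec.span (V \<union> W) \<subseteq> vec.span (Y \<union> W)"
    using assms vec.span_mono[of "V \<union> W" "Y \<union> W"] vec.span_superset[of "Y \<union> W"] by auto
  moreover have "Y \<union> W \<subseteq> vec.span (Y \<union> vec.span (V \<union> W))"
    using vec.span_superset[of "Y \<union> vec.span (V \<union> W)"] vec.span_superset[of "V \<union> W"] by auto
  ultimately show ?thesis by (simp add: vec.span_eq)
qed

lemma span_in_subspace:
  fixes A S :: "('a::{field,finite} ^ 'n) set"
  assumes "vec.subspace A" "S \<subseteq> A"
  shows "vec.span S \<subseteq> A"
  using assms by (metis vec.span_eq_iff vec.span_mono)

lemma subspace_eq_dim:
  fixes S T :: "('a::{field,finite} ^ 'n) set"
  assumes "vec.subspace S" "vec.subspace T" "S \<subseteq> T" "vec.dim T \<le> vec.dim S"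
  shows "S = T"
  using assms vec.dim_eq_span[of S T] by (metis vec.span_eq_iff)

lemma ext_Suc:
  fixes Y A :: "('a::{field,finite} ^ 'n) set"
  shows "ext Y A (Suc r) = (\<lambda>(ws, w). ws @ [w]) ` (SIGMA ws:ext Y A r. A - vec.span (Y \<union> set ws))"
proof
  show "ext Y A (Suc r) \<subseteq> (\<lambda>(ws, w). ws @ [w]) ` (SIGMA ws:ext Y A r. A - vec.span (Y \<union> set ws))"
  proof
    fix vs assume vs: "vs \<in> ext Y A (Suc r)"
    then have "vs \<noteq> []" unfolding ext_def by auto
    then obtain ws w where vsw: "vs = ws @ [w]" by (metis rev_exhaust)
    have eq: "Y \<union> set vs = insert w (Y \<union> set ws)" using vsw by auto
    have d: "vec.dim (insert w (Y \<union> set ws)) = vec.dim Y + Suc r"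
      using vs eq unfolding ext_def by simp
    have len: "length ws = r" using vs vsw unfolding ext_def by simp
    have le: "vec.dim (Y \<union> set ws) \<le> vec.dim Y + r" using dim_le_list[of Y ws] len by simp
    have "w \<notin> vec.span (Y \<union> set ws) \<and> vec.dim (Y \<union> set ws) = vec.dim Y + r"
      using d le unfolding vec.dim_insert by (auto split: if_splits)
    then have "(ws, w) \<in> (SIGMA ws:ext Y A r. A - vec.span (Y \<union> set ws))"
      using vs vsw len unfolding ext_def by auto
    then show "vs \<in> (\<lambda>(ws, w). ws @ [w]) ` (SIGMA ws:ext Y A r. A - vec.span (Y \<union> set ws))"
      using vsw by force
  qed
  show "(\<lambda>(ws, w). ws @ [w]) ` (SIGMA ws:ext Y A r. A - vec.span (Y \<union> set ws)) \<subseteq> ext Y A (Suc r)"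
  proof clarify
    fix ws w assume a: "ws \<in> ext Y A r" "w \<in> A" "w \<notin> vec.span (Y \<union> set ws)"
    have eq: "Y \<union> set (ws @ [w]) = insert w (Y \<union> set ws)" by auto
    show "ws @ [w] \<in> ext Y A (Suc r)"
      using a unfolding ext_def eq by (simp add: vec.dim_insert)
  qed
qed

lemma card_ext:
  fixes Y A :: "('a::{field,finite} ^ 'n) set"
  assumes "vec.subspace Y" "vec.subspace A" "Y \<subseteq> A"
  shows "card (ext Y A r) = (\<Prod>i<r. CARD('a) ^ vec.dim A - CARD('a) ^ (vec.dim Y + i))"
proof (induction r)
  case 0
  have "ext Y A 0 = {[]}" unfolding ext_def by auto
  then show ?case by simp
next
  case (Suc r)
  have inj: "inj_on (\<lambda>(ws, w). ws @ [w]) (SIGMA ws:ext Y A r. A - vec.span (Y \<union> set ws))"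
    by (auto simp: inj_on_def)
  have c: "card (A - vec.span (Y \<union> set ws)) = CARD('a) ^ vec.dim A - CARD('a) ^ (vec.dim Y + r)"
    if ws: "ws \<in> ext Y A r" for ws
  proof -
    have sub: "vec.span (Y \<union> set ws) \<subseteq> A"
      using ws assms span_in_subspace[of A "Y \<union> set ws"] unfolding ext_def by auto
    have "card (vec.span (Y \<union> set ws)) = CARD('a) ^ (vec.dim Y + r)"
      using card_subspace[OF vec.subspace_span[of "Y \<union> set ws"]] ws unfolding ext_def
      by (simp add: vec.dim_span)
    moreover have "card A = CARD('a) ^ vec.dim A" using card_subspace[OF assms(2)] .
    ultimately show ?thesis using sub by (simp add: card_Diff_subset)
  qed
  have "card (ext Y A (Suc r)) = card (SIGMA ws:ext Y A r. A - vec.span (Y \<union> set ws))"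
    unfolding ext_Suc using card_image[OF inj] .
  also have "\<dots> = (\<Sum>ws\<in>ext Y A r. card (A - vec.span (Y \<union> set ws)))"
    by (rule card_SigmaI) (auto simp: finite_ext)
  also have "\<dots> = (\<Sum>ws\<in>ext Y A r. CARD('a) ^ vec.dim A - CARD('a) ^ (vec.dim Y + r))"
    using c by (rule sum.cong[OF refl])
  also have "\<dots> = card (ext Y A r) * (CARD('a) ^ vec.dim A - CARD('a) ^ (vec.dim Y + r))"
    by simp
  finally show ?case using Suc by simp
qed

lemma count_main:
  fixes V Y A :: "('a::{field,finite} ^ 'n) set"
  assumes sV: "vec.subspace V" and sY: "vec.subspace Y" and sA: "vec.subspace A"
    and VY: "V \<subseteq> Y" and YA: "Y \<subseteq> A"
  shows "card {Z. vec.subspace Z \<and> V \<subseteq> Z \<and> Z \<subseteq> A \<and> vec.dim Z = vec.dim V + r \<and> Z \<inter> Y = V}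
           * (\<Prod>i<r. CARD('a) ^ (vec.dim V + r) - CARD('a) ^ (vec.dim V + i))
         = (\<Prod>i<r. CARD('a) ^ vec.dim A - CARD('a) ^ (vec.dim Y + i))"
proof -
  define T where "T = {Z. vec.subspace Z \<and> V \<subseteq> Z \<and> Z \<subseteq> A \<and> vec.dim Z = vec.dim V + r \<and> Z \<inter> Y = V}"
  define h where "h = (\<lambda>ws. vec.span (V \<union> set ws))"
  have VA: "V \<subseteq> A" using VY YA by auto
  have dimUZ: "vec.dim (Y \<union> set ws) = vec.dim (Y \<union> h ws)" for ws
  proof -
    have "vec.span (Y \<union> h ws) = vec.span (Y \<union> set ws)" unfolding h_def using span_absorb[OF VY] .
    then show ?thesis by (metis vec.dim_span)
  qed
  have hT: "h ws \<in> T" if ws: "ws \<in> ext Y A r" for ws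
  proof -
    let ?Z = "h ws"
    have sZ: "vec.subspace ?Z" unfolding h_def by (rule vec.subspace_span)
    have VZ: "V \<subseteq> ?Z" unfolding h_def using vec.span_superset by blast
    have ZA: "?Z \<subseteq> A" unfolding h_def using ws VA sA span_in_subspace[of A "V \<union> set ws"]
      unfolding ext_def by auto
    have le: "vec.dim ?Z \<le> vec.dim V + r"
      unfolding h_def vec.dim_span using dim_le_list[of V ws] ws unfolding ext_def by simp
    have d1: "vec.dim (Y \<union> ?Z) = vec.dim Y + r" using ws dimUZ[of ws] unfolding ext_def by simp
    have d2: "vec.dim V \<le> vec.dim (Y \<inter> ?Z)" using VY VZ by (intro vec.dim_subset) auto
    have f: "vec.dim (Y \<union> ?Z) + vec.dim (Y \<inter> ?Z) = vec.dim Y + vec.dim ?Z"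
      using dim_un_int[OF sY sZ] .
    have dZ: "vec.dim ?Z = vec.dim V + r" using le d1 d2 f by linarith
    have "vec.dim (Y \<inter> ?Z) = vec.dim V" using le d1 d2 f by linarith
    then have "V = Y \<inter> ?Z"
      using subspace_eq_dim[of V "Y \<inter> ?Z"] sV vec.subspace_inter[OF sY sZ] VY VZ by auto
    then show ?thesis unfolding T_def using sZ VZ ZA dZ by auto
  qed
  have fiber: "{ws \<in> ext Y A r. h ws = Z} = ext V Z r" if Z: "Z \<in> T" for Z
  proof
    have sZ: "vec.subspace Z" and VZ: "V \<subseteq> Z" and ZA: "Z \<subseteq> A"
      and dZ: "vec.dim Z = vec.dim V + r" and YZ: "Z \<inter> Y = V" using Z unfolding T_def by auto
    show "{ws \<in> ext Y A r. h ws = Z} \<subseteq> ext V Z r"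
    proof
      fix ws assume "ws \<in> {ws \<in> ext Y A r. h ws = Z}"
      then have ws: "ws \<in> ext Y A r" "Z = h ws" by auto
      have "set ws \<subseteq> Z" using ws(2) vec.span_superset unfolding h_def by blast
      moreover have "vec.dim (V \<union> set ws) = vec.dim V + r"
        using dZ ws(2) unfolding h_def vec.dim_span by simp
      ultimately show "ws \<in> ext V Z r" using ws(1) unfolding ext_def by auto
    qed
    show "ext V Z r \<subseteq> {ws \<in> ext Y A r. h ws = Z}"
    proof
      fix ws assume ws: "ws \<in> ext V Z r"
      have sub: "h ws \<subseteq> Z" unfolding h_def using span_in_subspace[OF sZ, of "V \<union> set ws"] ws VZ
        unfolding ext_def by auto
      have "vec.dim (h ws) = vec.dim V + r" using ws unfolding ext_def h_def vec.dim_span by simp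
      then have hZ: "h ws = Z" using subspace_eq_dim[OF _ sZ sub] dZ unfolding h_def
        using vec.subspace_span by auto
      have "vec.dim (Y \<union> set ws) = vec.dim Y + r"
        using dimUZ[of ws] dim_un_int[OF sY sZ] YZ dZ hZ by (simp add: Int_commute)
      then show "ws \<in> {ws \<in> ext Y A r. h ws = Z}" using ws ZA hZ unfolding ext_def by auto
    qed
  qed
  have fT: "finite T" by simp
  have "ext Y A r = (\<Union>Z\<in>T. {ws \<in> ext Y A r. h ws = Z})" using hT by auto
  moreover have "card (\<Union>Z\<in>T. {ws \<in> ext Y A r. h ws = Z}) = (\<Sum>Z\<in>T. card {ws \<in> ext Y A r. h ws = Z})"
    by (rule card_UN_disjoint[OF fT]) (auto simp: finite_ext)
  ultimately have "card (ext Y A r) = (\<Sum>Z\<in>T. card {ws \<in> ext Y A r. h ws = Z})"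
    by simp
  also have "\<dots> = (\<Sum>Z\<in>T. card (ext V Z r))" using fiber by (intro sum.cong) auto
  also have "\<dots> = (\<Sum>Z\<in>T. \<Prod>i<r. CARD('a) ^ (vec.dim V + r) - CARD('a) ^ (vec.dim V + i))"
  proof (intro sum.cong refl)
    fix Z assume "Z \<in> T"
    then show "card (ext V Z r) = (\<Prod>i<r. CARD('a) ^ (vec.dim V + r) - CARD('a) ^ (vec.dim V + i))"
      using card_ext[OF sV, of Z r] unfolding T_def by auto
  qed
  also have "\<dots> = card T * (\<Prod>i<r. CARD('a) ^ (vec.dim V + r) - CARD('a) ^ (vec.dim V + i))"
    by simp
  finally show ?thesis using card_ext[OF sY sA YA, of r] unfolding T_def by simp
qed



lemma prod_factor:
  fixes q e r :: nat
  shows "(\<Prod>i<r. q ^ (e + f i) - q ^ (e + g i)) = q ^ (e * r) * (\<Prod>i<r. q ^ f i - q ^ g i)"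
proof -
  have "(\<Prod>i<r. q ^ (e + f i) - q ^ (e + g i)) = (\<Prod>i<r. q ^ e * (q ^ f i - q ^ g i))"
    by (simp add: power_add diff_mult_distrib2)
  also have "\<dots> = (\<Prod>i<r. q ^ e) * (\<Prod>i<r. q ^ f i - q ^ g i)" by (rule prod.distrib)
  also have "(\<Prod>i<r. q ^ e) = q ^ (e * r)" by (simp add: power_mult)
  finally show ?thesis .
qed

lemma prod_pos_pw:
  fixes q b r :: nat
  assumes "q \<ge> 2"
  shows "(\<Prod>i<r. q ^ (b + r) - q ^ (b + i)) > 0"
proof -
  have "q ^ (b + i) < q ^ (b + r)" if "i < r" for i
    using assms that by (intro power_strict_increasing) auto
  then show ?thesis by (auto intro: Groups_Big.linordered_semidom_class.prod_pos)
qed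

lemma alg1:
  fixes q c e b r :: nat
  assumes "q \<ge> 2"
    and "c * (\<Prod>i<r. q ^ (b + r) - q ^ (b + i)) = (\<Prod>i<r. q ^ (e + (b + r)) - q ^ (e + (b + i)))"
  shows "c = q ^ (e * r)"
proof -
  define P where "P = (\<Prod>i<r. q ^ (b + r) - q ^ (b + i))"
  have "c * P = q ^ (e * r) * P"
    using assms(2) prod_factor[of q e "\<lambda>_. b + r" "\<lambda>i. b + i" r] unfolding P_def by simp
  moreover have "P \<noteq> 0" using prod_pos_pw[OF assms(1), of b r] unfolding P_def by linarith
  ultimately show ?thesis using mult_right_cancel[of P c "q ^ (e * r)"] by blast
qed

lemma prod_split_pow:
  fixes q x r :: nat
  assumes "r \<le> x"
  shows "(\<Prod>i<r. q ^ x - q ^ i) = (\<Prod>i<r. q ^ i) * (\<Prod>i<r. q ^ (x - i) - 1)"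
proof -
  have "(\<Prod>i<r. q ^ x - q ^ i) = (\<Prod>i<r. q ^ i * (q ^ (x - i) - 1))"
  proof (intro prod.cong refl)
    fix i assume "i \<in> {..<r}"
    then have ix: "i + (x - i) = x" using assms by auto
    have "q ^ i * q ^ (x - i) = q ^ (i + (x - i))" by (simp only: power_add)
    then have "q ^ x = q ^ i * q ^ (x - i)" unfolding ix by simp
    then show "q ^ x - q ^ i = q ^ i * (q ^ (x - i) - 1)" by (simp only: diff_mult_distrib2 mult_1_right)
  qed
  then show ?thesis by (simp add: prod.distrib)
qed

lemma alg2:
  fixes q c t r s :: nat
  assumes q: "q \<ge> 2" and rs: "r \<le> s"
    and h: "c * (\<Prod>i<r. q ^ (t + r) - q ^ (t + i)) = (\<Prod>i<r. q ^ (t + s) - q ^ (t + i))"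
  shows "c = gauss_binom q s r \<and> c * (\<Prod>i<r. q ^ (i + 1) - 1) = (\<Prod>i<r. q ^ (s - i) - 1)"
proof -
  have q0: "(\<Prod>i<r. q ^ i) > 0" using q by (auto intro: prod_pos)
  have "c * (q ^ (t * r) * (\<Prod>i<r. q ^ r - q ^ i)) = q ^ (t * r) * (\<Prod>i<r. q ^ s - q ^ i)"
    using h prod_factor[of q t "\<lambda>_. r" "\<lambda>i. i" r] prod_factor[of q t "\<lambda>_. s" "\<lambda>i. i" r] by simp
  then have "c * (\<Prod>i<r. q ^ r - q ^ i) = (\<Prod>i<r. q ^ s - q ^ i)"
    using q by simp
  then have "c * ((\<Prod>i<r. q ^ i) * (\<Prod>i<r. q ^ (r - i) - 1)) = (\<Prod>i<r. q ^ i) * (\<Prod>i<r. q ^ (s - i) - 1)"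
    using prod_split_pow[of r r q] prod_split_pow[OF rs, of q] by simp
  then have e: "c * (\<Prod>i<r. q ^ (r - i) - 1) = (\<Prod>i<r. q ^ (s - i) - 1)"
    using q0 q by auto
  have "(\<Prod>i<r. q ^ (r - i) - 1) = (\<Prod>i<r. q ^ (r - Suc i + 1) - 1)"
  proof (intro prod.cong refl)
    fix i assume "i \<in> {..<r}"
    then have "r - Suc i + 1 = r - i" by auto
    then show "q ^ (r - i) - 1 = q ^ (r - Suc i + 1) - 1" by simp
  qed
  also have "\<dots> = (\<Prod>i<r. q ^ (i + 1) - 1)"
    using prod.nat_diff_reindex[of "\<lambda>j. q ^ (j + 1) - 1" r] by simp
  finally have e2: "(\<Prod>i<r. q ^ (r - i) - 1) = (\<Prod>i<r. q ^ (i + 1) - 1)" .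
  have pos: "(\<Prod>i<r. q ^ (i + 1) - (1::nat)) > 0"
  proof (intro prod_pos ballI)
    fix i assume "i \<in> {..<r}"
    have "q ^ (i + 1) \<ge> 2 ^ (i + 1)" using q by (intro power_mono) auto
    moreover have "(2::nat) ^ (i + 1) \<ge> 2" using one_le_power[of "2::nat" i] by simp
    ultimately show "q ^ (i + 1) - 1 > 0" by linarith
  qed
  have key: "c * (\<Prod>i<r. q ^ (i + 1) - 1) = (\<Prod>i<r. q ^ (s - i) - 1)" using e e2 by simp
  define X where "X = (\<Prod>i<r. q ^ (i + 1) - (1::nat))"
  define Y where "Y = (\<Prod>i<r. q ^ (s - i) - (1::nat))"
  have "c * X = Y" using e e2 unfolding X_def Y_def by simp
  moreover have "X \<noteq> 0" using pos unfolding X_def by (metis less_not_refl2)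
  ultimately have "Y div X = c" using nonzero_mult_div_cancel_right[of X c] by simp
  moreover have "Y div X = gauss_binom q s r" unfolding gauss_binom_def X_def Y_def by (rule refl)
  ultimately show ?thesis using key by simp
qed

lemma gauss_sym_aux:
  fixes q j k :: nat
  assumes "j \<le> k"
  shows "(\<Prod>i<j. q ^ (k - i) - 1) * (\<Prod>i<k - j. q ^ (i + 1) - 1) = (\<Prod>i<k. q ^ (i + 1) - 1)"
proof -
  define g where "g = (\<lambda>i. q ^ (i + 1) - (1::nat))"
  have "(\<Prod>i<k. g i) = (\<Prod>i<k. g (k - Suc i))" by (rule prod.nat_diff_reindex[symmetric])
  also have "\<dots> = (\<Prod>i<j. g (k - Suc i)) * (\<Prod>i\<in>{j..<k}. g (k - Suc i))"
    using assms by (metis prod.atLeastLessThan_concat atLeast0LessThan zero_le)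
  also have "(\<Prod>i\<in>{j..<k}. g (k - Suc i)) = (\<Prod>i\<in>{0..<k - j}. g (k - Suc (i + j)))"
    using prod.shift_bounds_nat_ivl[of "\<lambda>i. g (k - Suc i)" 0 j "k - j"] assms by simp
  also have "\<dots> = (\<Prod>i<k - j. g ((k - j) - Suc i))"
    by (simp add: atLeast0LessThan ac_simps)
  also have "\<dots> = (\<Prod>i<k - j. g i)" by (rule prod.nat_diff_reindex)
  also have "(\<Prod>i<j. g (k - Suc i)) = (\<Prod>i<j. q ^ (k - i) - 1)"
  proof (intro prod.cong refl)
    fix i assume "i \<in> {..<j}"
    then have "k - Suc i + 1 = k - i" using assms by auto
    then show "g (k - Suc i) = q ^ (k - i) - 1" unfolding g_def by simp
  qed
  finally show ?thesis unfolding g_def by simp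
qed

lemma card_sym:
  fixes q m k c1 c2 :: nat
  assumes q: "q \<ge> 2" and mk: "m \<le> k"
    and h1: "c1 * (\<Prod>i<m. q ^ (i + 1) - 1) = (\<Prod>i<m. q ^ (k - i) - 1)"
    and h2: "c2 * (\<Prod>i<k - m. q ^ (i + 1) - 1) = (\<Prod>i<k - m. q ^ (k - i) - 1)"
  shows "c1 = c2"
proof -
  define P where "P = (\<lambda>r. \<Prod>i<r. q ^ (i + 1) - (1::nat))"
  have Ppos: "P r > 0" for r
  proof -
    have "q ^ (i + 1) - 1 > 0" for i
    proof -
      have "q ^ (i + 1) \<ge> 2 ^ (i + 1)" using q by (intro power_mono) auto
      moreover have "(2::nat) ^ (i + 1) \<ge> 2" using one_le_power[of "2::nat" i] by simp
      ultimately show ?thesis by linarith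
    qed
    then show ?thesis unfolding P_def by (auto intro: prod_pos)
  qed
  have a: "c1 * P m * P (k - m) = P k"
    using h1 gauss_sym_aux[OF mk, of q] unfolding P_def by simp
  have b: "c2 * P (k - m) * P m = P k"
    using h2 gauss_sym_aux[of "k - m" k q] mk unfolding P_def by simp
  have "c1 * (P m * P (k - m)) = c2 * (P m * P (k - m))" using a b by (simp add: ac_simps)
  moreover have "P m * P (k - m) \<noteq> 0" using Ppos by simp
  ultimately show ?thesis by simp
qed



lemma card_field_ge2: "CARD('a::{field,finite}) \<ge> 2"
proof -
  have "{0, 1} \<subseteq> (UNIV :: 'a set)" by simp
  then have "card {0::'a, 1} \<le> CARD('a)" by (intro card_mono) auto
  then show ?thesis by simp
qed

lemma dim_UNIV_vec: "vec.dim (UNIV :: ('a::{field,finite} ^ 'n) set) = CARD('n)"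
  by (simp add: vec.dim_UNIV card_cart_basis)

lemma Gcount:
  fixes V A :: "('a::{field,finite} ^ 'n) set"
  assumes sV: "vec.subspace V" and sA: "vec.subspace A" and VA: "V \<subseteq> A"
    and le: "vec.dim V + r \<le> vec.dim A"
  shows "card {Z. vec.subspace Z \<and> V \<subseteq> Z \<and> Z \<subseteq> A \<and> vec.dim Z = vec.dim V + r}
           = gauss_binom CARD('a) (vec.dim A - vec.dim V) r"
    and "card {Z. vec.subspace Z \<and> V \<subseteq> Z \<and> Z \<subseteq> A \<and> vec.dim Z = vec.dim V + r}
           * (\<Prod>i<r. CARD('a) ^ (i + 1) - 1) = (\<Prod>i<r. CARD('a) ^ ((vec.dim A - vec.dim V) - i) - 1)"
    and "card {Z. vec.subspace Z \<and> V \<subseteq> Z \<and> Z \<subseteq> A \<and> vec.dim Z = vec.dim V + r} > 0"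
proof -
  define T where "T = {Z. vec.subspace Z \<and> V \<subseteq> Z \<and> Z \<subseteq> A \<and> vec.dim Z = vec.dim V + r}"
  define t where "t = vec.dim V"
  define s where "s = vec.dim A - vec.dim V"
  have As: "vec.dim A = t + s" using le unfolding t_def s_def by simp
  have rs: "r \<le> s" using le unfolding t_def s_def by simp
  have T': "T = {Z. vec.subspace Z \<and> V \<subseteq> Z \<and> Z \<subseteq> A \<and> vec.dim Z = vec.dim V + r \<and> Z \<inter> V = V}"
    unfolding T_def by auto
  have h: "card T * (\<Prod>i<r. CARD('a) ^ (t + r) - CARD('a) ^ (t + i))
         = (\<Prod>i<r. CARD('a) ^ (t + s) - CARD('a) ^ (t + i))"
    using count_main[OF sV sV sA subset_refl VA, of r] unfolding T' t_def[symmetric] As .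
  have r: "card T = gauss_binom CARD('a) s r \<and>
      card T * (\<Prod>i<r. CARD('a) ^ (i + 1) - 1) = (\<Prod>i<r. CARD('a) ^ (s - i) - 1)"
    by (rule alg2[OF card_field_ge2 rs h])
  then show "card T = gauss_binom CARD('a) (vec.dim A - vec.dim V) r"
    "card T * (\<Prod>i<r. CARD('a) ^ (i + 1) - 1) = (\<Prod>i<r. CARD('a) ^ ((vec.dim A - vec.dim V) - i) - 1)"
    unfolding s_def by auto
  have "(\<Prod>i<r. CARD('a) ^ (t + s) - CARD('a) ^ (t + i)) > 0"
  proof (intro prod_pos ballI)
    fix i assume "i \<in> {..<r}"
    then have "t + i < t + s" using rs by auto
    then have "CARD('a) ^ (t + i) < CARD('a) ^ (t + s)"
      using card_field_ge2[where 'a='a] by (intro power_strict_increasing) auto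
    then show "CARD('a) ^ (t + s) - CARD('a) ^ (t + i) > 0" by simp
  qed
  then show "card T > 0" using h by (metis gr0I mult_0)
qed

lemma deg_count:
  fixes V Y :: "('a::{field,finite} ^ 'n) set"
  assumes sV: "vec.subspace V" and sY: "vec.subspace Y" and VY: "V \<subseteq> Y"
    and dV: "vec.dim V = b" and dY: "vec.dim Y = e + b" and k: "e + b + r = CARD('n)"
  shows "card {Z. vec.subspace Z \<and> V \<subseteq> Z \<and> vec.dim Z = b + r \<and> Z \<inter> Y = V} = CARD('a) ^ (e * r)"
proof -
  have eq: "{Z. vec.subspace Z \<and> V \<subseteq> Z \<and> vec.dim Z = b + r \<and> Z \<inter> Y = V}
    = {Z. vec.subspace Z \<and> V \<subseteq> Z \<and> Z \<subseteq> UNIV \<and> vec.dim Z = b + r \<and> Z \<inter> Y = V}"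
    by auto
  have dU: "vec.dim (UNIV :: ('a ^ 'n) set) = e + (b + r)" using dim_UNIV_vec[where 'a='a and 'n='n] k by simp
  have dY': "\<And>i. vec.dim Y + i = e + (b + i)" using dY by simp
  have h: "card {Z. vec.subspace Z \<and> V \<subseteq> Z \<and> vec.dim Z = b + r \<and> Z \<inter> Y = V}
     * (\<Prod>i<r. CARD('a) ^ (b + r) - CARD('a) ^ (b + i))
     = (\<Prod>i<r. CARD('a) ^ (e + (b + r)) - CARD('a) ^ (e + (b + i)))"
    using count_main[OF sV sY vec.subspace_UNIV VY subset_UNIV, of r] unfolding dU dY' dV eq[symmetric] .
  show ?thesis by (rule alg1[OF card_field_ge2 h])
qed

lemma Gr_card:
  assumes "j \<le> CARD('n)"
  shows "card {Z :: ('a::{field,finite} ^ 'n) set. vec.subspace Z \<and> vec.dim Z = j} = gauss_binom CARD('a) CARD('n) j"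
    and "card {Z :: ('a::{field,finite} ^ 'n) set. vec.subspace Z \<and> vec.dim Z = j}
           * (\<Prod>i<j. CARD('a) ^ (i + 1) - 1) = (\<Prod>i<j. CARD('a) ^ (CARD('n) - i) - 1)"
    and "card {Z :: ('a::{field,finite} ^ 'n) set. vec.subspace Z \<and> vec.dim Z = j} > 0"
proof -
  have eq: "{Z :: ('a ^ 'n) set. vec.subspace Z \<and> vec.dim Z = j}
    = {Z. vec.subspace Z \<and> {0} \<subseteq> Z \<and> Z \<subseteq> UNIV \<and> vec.dim Z = vec.dim {0::'a^'n} + j}"
    using vec.subspace_0 by (auto simp: vec.dim_eq_0)
  have d0: "vec.dim {0::'a^'n} = 0" by (simp add: vec.dim_eq_0)
  have le: "vec.dim {0::'a^'n} + j \<le> vec.dim (UNIV :: ('a^'n) set)"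
    using assms d0 dim_UNIV_vec[where 'a='a and 'n='n] by simp
  note G = Gcount[OF vec.subspace_single_0 vec.subspace_UNIV subset_UNIV le]
  show "card {Z :: ('a ^ 'n) set. vec.subspace Z \<and> vec.dim Z = j} = gauss_binom CARD('a) CARD('n) j"
  proof -
    have "card {Z :: ('a ^ 'n) set. vec.subspace Z \<and> vec.dim Z = j} = gauss_binom CARD('a) (vec.dim (UNIV :: ('a ^ 'n) set) - vec.dim {0::'a^'n}) j"
      unfolding eq by (rule G(1))
    then show ?thesis unfolding d0 dim_UNIV_vec by simp
  qed
  show "card {Z :: ('a ^ 'n) set. vec.subspace Z \<and> vec.dim Z = j}
           * (\<Prod>i<j. CARD('a) ^ (i + 1) - 1) = (\<Prod>i<j. CARD('a) ^ (CARD('n) - i) - 1)"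
  proof -
    have "card {Z :: ('a ^ 'n) set. vec.subspace Z \<and> vec.dim Z = j} * (\<Prod>i<j. CARD('a) ^ (i + 1) - 1) = (\<Prod>i<j. CARD('a) ^ ((vec.dim (UNIV :: ('a ^ 'n) set) - vec.dim {0::'a^'n}) - i) - 1)"
      unfolding eq by (rule G(2))
    then show ?thesis unfolding d0 dim_UNIV_vec by simp
  qed
  show "card {Z :: ('a ^ 'n) set. vec.subspace Z \<and> vec.dim Z = j} > 0"
    unfolding eq by (rule G(3))
qed

theorem theorem2:
  fixes q t m :: nat
    and Vs Xs :: "('a::{field,finite} ^ 'n) set set"
    and E :: "(('a ^ 'n) set \<times> ('a ^ 'n) set) set"
  assumes "CARD('a) = q"
    and "0 < t" and "0 < m" and "m + t \<le> CARD('n)"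
    and "Vs = {V. vec.subspace V \<and> vec.dim V = t}"
    and "Xs = {X. vec.subspace X \<and> vec.dim X = m + t}"
    and "E = {(V, X). V \<in> Vs \<and> X \<in> Xs \<and> V \<subseteq> X}"
  shows "caching_graph (gauss_binom q CARD('n) t) (gauss_binom q CARD('n) (m + t))
           (gauss_binom q (CARD('n) - t) m) Vs Xs E
       \<and> (\<exists>Cs. induced_matching_cover E Cs
              \<and> card Cs = gauss_binom q CARD('n) m
              \<and> (\<forall>C\<in>Cs. card C = gauss_binom q (CARD('n) - m) t))
       \<and> cache_fraction (gauss_binom q CARD('n) (m + t)) (gauss_binom q (CARD('n) - t) m)
           = 1 - real (gauss_binom q (CARD('n) - t) m) / real (gauss_binom q CARD('n) (m + t))
       \<and> scheme_rate (gauss_binom q CARD('n) (m + t)) (gauss_binom q CARD('n) m)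
           = real (gauss_binom q CARD('n) m) / real (gauss_binom q CARD('n) (m + t))
       \<and> caching_gain (gauss_binom q CARD('n) t) (gauss_binom q CARD('n) (m + t))
           (gauss_binom q (CARD('n) - t) m) (gauss_binom q CARD('n) m)
           = real (gauss_binom q (CARD('n) - m) t)"
proof -
  note qdef = assms(1)[symmetric]
  note GC = Gr_card[where 'a='a and 'n='n]
  define k where "k = CARD('n)"
  have mtk: "m + t \<le> k" using assms(4) unfolding k_def .
  have dU: "vec.dim (UNIV :: ('a ^ 'n) set) = k" unfolding k_def by (rule dim_UNIV_vec)
  have Vs: "Vs = {V. vec.subspace V \<and> vec.dim V = t}" by (rule assms(5))
  have Xs: "Xs = {X. vec.subspace X \<and> vec.dim X = m + t}" by (rule assms(6))
  have E: "E = {(V, X). V \<in> Vs \<and> X \<in> Xs \<and> V \<subseteq> X}" by (rule assms(7))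
  define K where "K = gauss_binom q k t"
  define F where "F = gauss_binom q k (m + t)"
  define D where "D = gauss_binom q (k - t) m"
  define S where "S = gauss_binom q k m"
  define g where "g = gauss_binom q (k - m) t"
  have cardV: "card Vs = K" unfolding Vs K_def k_def qdef using GC(1)[of t] mtk k_def by simp
  have cardX: "card Xs = F" unfolding Xs F_def k_def qdef using GC(1)[of "m + t"] mtk k_def by simp
  have Fpos: "F > 0" using GC(3)[of "m + t"] mtk cardX unfolding Xs k_def by simp
  have finE: "finite E" by simp
  have degV: "card {f. (V, f) \<in> E} = D" if V: "V \<in> Vs" for V
  proof -
    have sV: "vec.subspace V" and dV: "vec.dim V = t" using V Vs by auto
    have eq: "{f. (V, f) \<in> E} = {Z. vec.subspace Z \<and> V \<subseteq> Z \<and> Z \<subseteq> UNIV \<and> vec.dim Z = vec.dim V + m}"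
      using V dV unfolding E Xs by auto
    have le: "vec.dim V + m \<le> vec.dim (UNIV :: ('a ^ 'n) set)" using dV dU mtk by simp
    have "card {f. (V, f) \<in> E} = gauss_binom CARD('a) (vec.dim (UNIV :: ('a ^ 'n) set) - vec.dim V) m"
      unfolding eq by (rule Gcount(1)[OF sV vec.subspace_UNIV subset_UNIV le])
    then show ?thesis unfolding D_def dU dV qdef .
  qed
  have CG: "caching_graph K F D Vs Xs E"
    unfolding caching_graph_def using cardV cardX degV unfolding E by auto

  define Us where "Us = {U :: ('a ^ 'n) set. vec.subspace U \<and> vec.dim U = k - m}"
  define P where "P = {(U, V). U \<in> Us \<and> V \<in> Vs \<and> V \<subseteq> U}"
  define N where "N = (\<lambda>e. (\<lambda>U. (U, fst e)) ` {U \<in> Us. fst e \<subseteq> U \<and> U \<inter> snd e = fst e})"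
  define c where "c = q ^ (m * (k - m - t))"
  have cpos: "c > 0" unfolding c_def qdef by simp
  have NP: "\<forall>a\<in>E. N a \<subseteq> P" unfolding N_def P_def E by auto
  have degA: "\<forall>a\<in>E. card (N a) = c"
  proof
    fix a assume a: "a \<in> E"
    obtain V X where aVX: "a = (V, X)" by (cases a)
    have sV: "vec.subspace V" and dV: "vec.dim V = t" and sX: "vec.subspace X"
      and dX: "vec.dim X = m + t" and VX: "V \<subseteq> X"
      using a unfolding aVX E Vs Xs by auto
    have "card (N a) = card {U \<in> Us. V \<subseteq> U \<and> U \<inter> X = V}"
      unfolding N_def aVX by (simp add: card_image inj_on_def)
    also have "{U \<in> Us. V \<subseteq> U \<and> U \<inter> X = V}
        = {Z. vec.subspace Z \<and> V \<subseteq> Z \<and> vec.dim Z = t + (k - m - t) \<and> Z \<inter> X = V}"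
      unfolding Us_def using mtk by auto
    also have "card \<dots> = CARD('a) ^ (m * (k - m - t))"
      by (rule deg_count[OF sV sX VX dV dX]) (use mtk k_def in simp)
    finally show "card (N a) = c" unfolding c_def qdef .
  qed
  have degB: "\<forall>b\<in>P. card {a\<in>E. b \<in> N a} = c"
  proof
    fix b assume b: "b \<in> P"
    obtain U V where bUV: "b = (U, V)" by (cases b)
    have sV: "vec.subspace V" and dV: "vec.dim V = t" and sU: "vec.subspace U"
      and dUU: "vec.dim U = (k - m - t) + t" and VU: "V \<subseteq> U" and UU: "U \<in> Us"
      using b mtk unfolding bUV P_def Us_def Vs by auto
    have "{a\<in>E. b \<in> N a} = (\<lambda>X. (V, X)) ` {Z. vec.subspace Z \<and> V \<subseteq> Z \<and> vec.dim Z = t + m \<and> Z \<inter> U = V}"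
    proof (intro equalityI subsetI)
      fix a assume a: "a \<in> {a\<in>E. b \<in> N a}"
      obtain V' X where aVX: "a = (V', X)" by (cases a)
      have "V' = V" "U \<inter> X = V" using a unfolding aVX bUV N_def by auto
      then show "a \<in> (\<lambda>X. (V, X)) ` {Z. vec.subspace Z \<and> V \<subseteq> Z \<and> vec.dim Z = t + m \<and> Z \<inter> U = V}"
        using a unfolding aVX E Xs by auto
    next
      fix a assume "a \<in> (\<lambda>X. (V, X)) ` {Z. vec.subspace Z \<and> V \<subseteq> Z \<and> vec.dim Z = t + m \<and> Z \<inter> U = V}"
      then obtain X where X: "a = (V, X)" "vec.subspace X" "V \<subseteq> X" "vec.dim X = t + m" "X \<inter> U = V"
        by auto
      have "a \<in> E" using X sV dV unfolding E Vs Xs by auto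
      moreover have "b \<in> N a" using X UU VU unfolding N_def bUV by (auto simp: image_iff)
      ultimately show "a \<in> {a\<in>E. b \<in> N a}" by simp
    qed
    then have "card {a\<in>E. b \<in> N a} = card {Z. vec.subspace Z \<and> V \<subseteq> Z \<and> vec.dim Z = t + m \<and> Z \<inter> U = V}"
      by (simp add: card_image inj_on_def)
    also have "\<dots> = CARD('a) ^ ((k - m - t) * m)"
      by (rule deg_count[OF sV sU VU dV dUU]) (use mtk k_def in simp)
    finally show "card {a\<in>E. b \<in> N a} = c" unfolding c_def qdef by (simp add: mult.commute)
  qed
  have finP: "finite P" by simp
  have hallc: "\<forall>S\<subseteq>E. card S \<le> card (\<Union>(N ` S))"
    using regular_count[OF finE finP NP degA degB] cpos by simp
  obtain f where f: "inj_on f E" "\<forall>a\<in>E. f a \<in> N a"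
    using hall[OF finE _ hallc] by auto
  have cEP: "card E = card P" by (rule regular_card_eq[OF finE finP NP degA degB cpos])
  have fEP: "f ` E = P"
  proof (rule card_subset_eq[OF finP])
    show "f ` E \<subseteq> P" using f NP by blast
    show "card (f ` E) = card P" using card_image[OF f(1)] cEP by simp
  qed
  have fprop: "f a = (fst (f a), fst a) \<and> fst (f a) \<in> Us \<and> fst a \<subseteq> fst (f a) \<and> fst (f a) \<inter> snd a = fst a"
    if a: "a \<in> E" for a
  proof -
    have "f a \<in> N a" using f(2) a by blast
    then obtain U where U: "f a = (U, fst a)" "U \<in> Us" "fst a \<subseteq> U" "U \<inter> snd a = fst a"
      unfolding N_def by blast
    then show ?thesis by simp
  qed
  define C where "C = (\<lambda>U. {a\<in>E. fst (f a) = U})"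
  define Cs where "Cs = C ` Us"
  have cardC: "card (C U) = g" and Cne: "C U \<noteq> {}" if U: "U \<in> Us" for U
  proof -
    have sU: "vec.subspace U" and dUU: "vec.dim U = k - m" using U unfolding Us_def by auto
    have img: "f ` C U = (\<lambda>V. (U, V)) ` {Z. vec.subspace Z \<and> {0} \<subseteq> Z \<and> Z \<subseteq> U \<and> vec.dim Z = vec.dim {0::'a^'n} + t}"
    proof (intro equalityI subsetI)
      fix b assume "b \<in> f ` C U"
      then obtain a where a: "a \<in> E" "fst (f a) = U" "b = f a" unfolding C_def by auto
      have "b \<in> P" using a fEP by auto
      then show "b \<in> (\<lambda>V. (U, V)) ` {Z. vec.subspace Z \<and> {0} \<subseteq> Z \<and> Z \<subseteq> U \<and> vec.dim Z = vec.dim {0::'a^'n} + t}"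
        using a vec.subspace_0 unfolding P_def Vs by (auto simp: vec.dim_eq_0 image_iff)
    next
      fix b assume "b \<in> (\<lambda>V. (U, V)) ` {Z. vec.subspace Z \<and> {0} \<subseteq> Z \<and> Z \<subseteq> U \<and> vec.dim Z = vec.dim {0::'a^'n} + t}"
      then have "b \<in> P" "fst b = U" using U unfolding P_def Vs by (auto simp: vec.dim_eq_0)
      then obtain a where "a \<in> E" "b = f a" using fEP by blast
      then show "b \<in> f ` C U" unfolding C_def using \<open>fst b = U\<close> by auto
    qed
    have injC: "inj_on f (C U)" using f(1) unfolding C_def by (rule inj_on_subset) auto
    have le: "vec.dim {0::'a^'n} + t \<le> vec.dim U" using dUU mtk by (simp add: vec.dim_eq_0)
    note G = Gcount[OF vec.subspace_single_0 sU _ le]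
    have "card (C U) = card (f ` C U)" using card_image[OF injC] by simp
    also have "\<dots> = card {Z. vec.subspace Z \<and> {0} \<subseteq> Z \<and> Z \<subseteq> U \<and> vec.dim Z = vec.dim {0::'a^'n} + t}"
      unfolding img by (simp add: card_image inj_on_def)
    finally have cc: "card (C U) = card {Z. vec.subspace Z \<and> {0} \<subseteq> Z \<and> Z \<subseteq> U \<and> vec.dim Z = vec.dim {0::'a^'n} + t}" .
    have z: "{0} \<subseteq> U" using sU vec.subspace_0 by auto
    show "card (C U) = g" unfolding cc G(1)[OF z] g_def qdef dUU by (simp add: vec.dim_eq_0)
    show "C U \<noteq> {}"
    proof
      assume "C U = {}"
      then have "card (C U) = 0" by simp
      then show False using cc G(3)[OF z] by linarith
    qed
  qed
  have induced: "induced_matching E (C U)" if U: "U \<in> Us" for U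
    unfolding induced_matching_def
  proof (intro conjI allI impI)
    show "C U \<subseteq> E" unfolding C_def by auto
    fix k1 f1 k2 f2 assume a1: "(k1, f1) \<in> C U" and a2: "(k2, f2) \<in> C U" and ne: "(k1, f1) \<noteq> (k2, f2)"
    have e1: "(k1, f1) \<in> E" and e2: "(k2, f2) \<in> E" using a1 a2 unfolding C_def by auto
    have fa1: "f (k1, f1) = (U, k1)" "k1 \<subseteq> U" "U \<inter> f1 = k1"
      using fprop[OF e1] a1 unfolding C_def by auto
    have fa2: "f (k2, f2) = (U, k2)" "k2 \<subseteq> U" "U \<inter> f2 = k2"
      using fprop[OF e2] a2 unfolding C_def by auto
    show k12: "k1 \<noteq> k2"
    proof
      assume "k1 = k2"
      then have "f (k1, f1) = f (k2, f2)" using fa1 fa2 by simp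
      then show False using f(1) e1 e2 ne unfolding inj_on_def by blast
    qed
    show "f1 \<noteq> f2" using fa1 fa2 k12 by auto
    have sub1: "vec.subspace k1" "vec.dim k1 = t" "vec.subspace k2" "vec.dim k2 = t"
      using e1 e2 unfolding E Vs by auto
    show "(k1, f2) \<notin> E"
    proof
      assume "(k1, f2) \<in> E"
      then have "k1 \<subseteq> f2" unfolding E by auto
      then have "k1 \<subseteq> k2" using fa1 fa2 by auto
      then have "k1 = k2" using subspace_eq_dim[of k1 k2] sub1 by simp
      then show False using k12 by simp
    qed
    show "(k2, f1) \<notin> E"
    proof
      assume "(k2, f1) \<in> E"
      then have "k2 \<subseteq> f1" unfolding E by auto
      then have "k2 \<subseteq> k1" using fa1 fa2 by auto
      then have "k2 = k1" using subspace_eq_dim[of k2 k1] sub1 by simp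
      then show False using k12 by simp
    qed
  qed
  have cover: "induced_matching_cover E Cs"
    unfolding induced_matching_cover_def
  proof (intro conjI ballI impI)
    fix Cc assume "Cc \<in> Cs"
    then obtain U where "U \<in> Us" "Cc = C U" unfolding Cs_def by auto
    then show "induced_matching E Cc" "Cc \<noteq> {}" using induced Cne by auto
  next
    show "\<Union>Cs = E"
    proof (intro equalityI subsetI)
      fix a assume "a \<in> \<Union>Cs" then show "a \<in> E" unfolding Cs_def C_def by auto
    next
      fix a assume a: "a \<in> E"
      then have "a \<in> C (fst (f a))" "fst (f a) \<in> Us" unfolding C_def using fprop[OF a] by auto
      then show "a \<in> \<Union>Cs" unfolding Cs_def by auto
    qed
  next
    fix C1 C2 assume "C1 \<in> Cs" "C2 \<in> Cs" "C1 \<noteq> C2"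
    then obtain U1 U2 where "C1 = C U1" "C2 = C U2" "U1 \<noteq> U2" unfolding Cs_def by auto
    then show "C1 \<inter> C2 = {}" unfolding C_def by auto
  qed
  have injCs: "inj_on C Us"
  proof (rule inj_onI)
    fix U1 U2 assume U: "U1 \<in> Us" "U2 \<in> Us" "C U1 = C U2"
    obtain a where "a \<in> C U1" using Cne[OF U(1)] by blast
    then show "U1 = U2" using U(3) unfolding C_def by auto
  qed
  have cardUs: "card Us = S"
  proof -
    have km: "k - m \<le> CARD('n)" unfolding k_def by simp
    have mk: "m \<le> CARD('n)" using mtk k_def by simp
    have h2: "card Us * (\<Prod>i<k - m. q ^ (i + 1) - 1) = (\<Prod>i<k - m. q ^ (k - i) - 1)"
      using GC(2)[OF km] unfolding Us_def k_def qdef .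
    have h1: "card {Z :: ('a ^ 'n) set. vec.subspace Z \<and> vec.dim Z = m} * (\<Prod>i<m. q ^ (i + 1) - 1) = (\<Prod>i<m. q ^ (k - i) - 1)"
      using GC(2)[OF mk] unfolding k_def qdef .
    have "card {Z :: ('a ^ 'n) set. vec.subspace Z \<and> vec.dim Z = m} = card Us"
      by (rule card_sym[OF _ _ h1 h2]) (use card_field_ge2[where 'a='a] qdef mtk in auto)
    then show ?thesis using GC(1)[OF mk] unfolding S_def k_def qdef by simp
  qed
  have cardCs: "card Cs = S" unfolding Cs_def using card_image[OF injCs] cardUs by simp
  have Spos: "S > 0" using GC(3)[of "k - m"] cardUs unfolding Us_def k_def by simp
  have Cg: "\<forall>Cc\<in>Cs. card Cc = g" unfolding Cs_def using cardC by auto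
  have "card E = card (Sigma Vs (\<lambda>V. {X. (V, X) \<in> E}))"
    by (rule arg_cong[where f=card]) (auto simp: E)
  also have "\<dots> = (\<Sum>V\<in>Vs. card {X. (V, X) \<in> E})" by (rule card_SigmaI) auto
  also have "\<dots> = (\<Sum>V\<in>Vs. D)" using degV by (intro sum.cong) auto
  finally have cE1: "card E = K * D" using cardV by simp
  have "card E = card (\<Union>Cs)" using cover unfolding induced_matching_cover_def by simp
  also have "\<dots> = sum card Cs"
  proof (rule card_Union_disjoint)
    show "disjoint Cs" using cover unfolding induced_matching_cover_def disjoint_def by blast
  qed auto
  also have "\<dots> = (\<Sum>Cc\<in>Cs. g)" using Cg by (intro sum.cong) auto
  finally have cE2: "card E = S * g" using cardCs by simp
  have KDSg: "real K * real D = real S * real g" using cE1 cE2 by (metis of_nat_mult)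
  have gain: "caching_gain K F D S = real g"
    unfolding caching_gain_def cache_fraction_def scheme_rate_def
    using Fpos Spos KDSg by (simp add: field_simps)
  show ?thesis
    using CG cover cardCs Cg gain
    unfolding K_def F_def D_def S_def g_def k_def
    by (auto simp: cache_fraction_def scheme_rate_def)
qed


end
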